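(* Let $\mathcal D$ be universal, $\mathrm M=(M,d)\in\mathfrak U_{\mathcal D}$, $A\subseteq M$ finite, $s\in\mathbb N$, and for each $i\in\{0,\dots,s-1\}$ let $\mathfrak t_i$ be a Katětov function of $\mathrm M$ with domain $A$ (not necessarily distinct). Let $d''$ be a metric on the index set $\{0,\dots,s-1\}$ with $d''(i,j)\in d(\mathfrak t_i,\mathfrak t_j)$ for all $i,j$. Define $d'$ on the disjoint union $A\sqcup\{0,\dots,s-1\}$ by $d'(x,y)=d(x,y)$ for $x,y\in A$, $d'(i,j)=d''(i,j)$, and $d'(x,i)=d'(i,x)=\mathfrak t_i(x)$ for $x\in A$. Then $d'$ is a metric, and for every $C\subseteq\{0,\dots,s-1\}$, every isometric embedding $\beta$ of $(A\cup C,d')$ into $\mathrm M$ with $\beta(x)=x$ for all $x\in A$ extends to an isometric embedding $\alpha$ of $(A\cup\{0,\dots,s-1\},d')$ into $\mathrm M$ with $\alpha(i)\in\operatorname{orb}(\mathfrak t_i)$ for all $i$.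
   Context: $\mathcal D$ is a finite subset of $\mathbb R_{\ge0}$ containing $0$. $\mathfrak U_{\mathcal D}$ is the class of countable homogeneous metric spaces (every isometry between finite subspaces extends to an isometry of the space onto itself) with distance set exactly $\mathcal D$ into which every finite metric space with distances in $\mathcal D$ embeds isometrically; $\mathcal D$ is universal if this class is nonempty. A Katětov function of $\mathrm M$ is a map $\mathfrak t:F\to\mathcal D\setminus\{0\}$, $F\subseteq M$ finite, with $|\mathfrak t(x)-\mathfrak t(y)|\le d(x,y)\le\mathfrak t(x)+\mathfrak t(y)$ for all $x,y\in F$; $\operatorname{orb}(\mathfrak t)=\{y\in M\setminus F: d(y,x)=\mathfrak t(x)\ \forall x\in F\}$. $d(\mathfrak s,\mathfrak t)=\{d(x,y):x\in\operatorname{orb}(\mathfrak s),y\in\operatorname{orb}(\mathfrak t)\}$. *)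

theory Defs
  imports Complex_Main "HOL-Library.Countable_Set"
begin

definition metric_on :: "'a set \<Rightarrow> ('a \<Rightarrow> 'a \<Rightarrow> real) \<Rightarrow> bool" where
  "metric_on X e \<longleftrightarrow>
     (\<forall>x\<in>X. \<forall>y\<in>X. e x y \<ge> 0 \<and> (e x y = 0 \<longleftrightarrow> x = y) \<and> e x y = e y x) \<and>
     (\<forall>x\<in>X. \<forall>y\<in>X. \<forall>z\<in>X. e x z \<le> e x y + e y z)"

definition iso_embed :: "'b set \<Rightarrow> ('b \<Rightarrow> 'b \<Rightarrow> real) \<Rightarrow> 'a set \<Rightarrow> ('a \<Rightarrow> 'a \<Rightarrow> real) \<Rightarrow> ('b \<Rightarrow> 'a) \<Rightarrow> bool" where
  "iso_embed X e M d f \<longleftrightarrow> (\<forall>x\<in>X. f x \<in> M) \<and> (\<forall>x\<in>X. \<forall>y\<in>X. d (f x) (f y) = e x y)"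

definition dist_set :: "'a set \<Rightarrow> ('a \<Rightarrow> 'a \<Rightarrow> real) \<Rightarrow> real set" where
  "dist_set M d = {d x y | x y. x \<in> M \<and> y \<in> M}"

definition homogeneous :: "'a set \<Rightarrow> ('a \<Rightarrow> 'a \<Rightarrow> real) \<Rightarrow> bool" where
  "homogeneous M d \<longleftrightarrow>
     (\<forall>F G f. F \<subseteq> M \<and> G \<subseteq> M \<and> finite F \<and> bij_betw f F G \<and>
        (\<forall>x\<in>F. \<forall>y\<in>F. d (f x) (f y) = d x y) \<longrightarrow>
        (\<exists>g. bij_betw g M M \<and> (\<forall>x\<in>M. \<forall>y\<in>M. d (g x) (g y) = d x y) \<and> (\<forall>x\<in>F. g x = f x)))"

text \<open>Every finite metric space with distances in D embeds isometrically.
  Finite metric spaces are represented (up to isometry) on finite subsets of nat.\<close>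
definition embeds_all_finite :: "real set \<Rightarrow> 'a set \<Rightarrow> ('a \<Rightarrow> 'a \<Rightarrow> real) \<Rightarrow> bool" where
  "embeds_all_finite D M d \<longleftrightarrow>
     (\<forall>(X::nat set) e. finite X \<and> metric_on X e \<and> (\<forall>x\<in>X. \<forall>y\<in>X. e x y \<in> D) \<longrightarrow>
        (\<exists>f. iso_embed X e M d f))"

definition in_U :: "real set \<Rightarrow> 'a set \<Rightarrow> ('a \<Rightarrow> 'a \<Rightarrow> real) \<Rightarrow> bool" where
  "in_U D M d \<longleftrightarrow> countable M \<and> metric_on M d \<and> homogeneous M d \<and>
     dist_set M d = D \<and> embeds_all_finite D M d"

text \<open>D is universal iff U_D is nonempty (its members are countable, so a nat carrier suffices).\<close>
definition universal_dset :: "real set \<Rightarrow> bool" where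
  "universal_dset D \<longleftrightarrow> (\<exists>(M::nat set) d. in_U D M d)"

definition katetov :: "real set \<Rightarrow> 'a set \<Rightarrow> ('a \<Rightarrow> 'a \<Rightarrow> real) \<Rightarrow> 'a set \<Rightarrow> ('a \<Rightarrow> real) \<Rightarrow> bool" where
  "katetov D M d F t \<longleftrightarrow> F \<subseteq> M \<and> finite F \<and> (\<forall>x\<in>F. t x \<in> D - {0}) \<and>
     (\<forall>x\<in>F. \<forall>y\<in>F. \<bar>t x - t y\<bar> \<le> d x y \<and> d x y \<le> t x + t y)"

definition orb :: "'a set \<Rightarrow> ('a \<Rightarrow> 'a \<Rightarrow> real) \<Rightarrow> 'a set \<Rightarrow> ('a \<Rightarrow> real) \<Rightarrow> 'a set" where
  "orb M d F t = {y \<in> M - F. \<forall>x\<in>F. d y x = t x}"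

definition kdist :: "'a set \<Rightarrow> ('a \<Rightarrow> 'a \<Rightarrow> real) \<Rightarrow> 'a set \<Rightarrow> ('a \<Rightarrow> real) \<Rightarrow> ('a \<Rightarrow> real) \<Rightarrow> real set" where
  "kdist M d F s t = {d x y | x y. x \<in> orb M d F s \<and> y \<in> orb M d F t}"

fun amalg :: "('a \<Rightarrow> 'a \<Rightarrow> real) \<Rightarrow> (nat \<Rightarrow> 'a \<Rightarrow> real) \<Rightarrow> (nat \<Rightarrow> nat \<Rightarrow> real) \<Rightarrow> 'a + nat \<Rightarrow> 'a + nat \<Rightarrow> real" where
  "amalg d t d'' (Inl x) (Inl y) = d x y"
| "amalg d t d'' (Inr i) (Inr j) = d'' i j"
| "amalg d t d'' (Inl x) (Inr i) = t i x"
| "amalg d t d'' (Inr i) (Inl x) = t i x"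

end

theory Submission
  imports Defs
begin

lemma extend_lemma:
  fixes S :: "'b set" and e :: "'b \<Rightarrow> 'b \<Rightarrow> real" and M :: "'a set"
  assumes MU: "in_U D M d" and Sf: "finite S" and Sm: "metric_on S e"
    and SD: "\<forall>x\<in>S. \<forall>y\<in>S. e x y \<in> D" and TS: "T \<subseteq> S" and be: "iso_embed T e M d \<beta>"
  shows "\<exists>\<alpha>. iso_embed S e M d \<alpha> \<and> (\<forall>z\<in>T. \<alpha> z = \<beta> z)"
proof -
  have Mm: "metric_on M d" and hom: "homogeneous M d" and emb: "embeds_all_finite D M d"
    using MU by (auto simp: in_U_def)
  obtain h where h: "bij_betw h {0..<card S} S" using ex_bij_betw_nat_finite[OF Sf] by blast
  define X where "X = {0..<card S}"
  define e' where "e' = (\<lambda>x y. e (h x) (h y))"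
  have hX: "\<And>x. x \<in> X \<Longrightarrow> h x \<in> S" using h unfolding X_def bij_betw_def by auto
  have hinj: "inj_on h X" using h unfolding X_def bij_betw_def by auto
  have "metric_on X e'"
    unfolding metric_on_def
  proof (intro conjI ballI)
    fix x y assume x: "x \<in> X" and y: "y \<in> X"
    have hx: "h x \<in> S" and hy: "h y \<in> S" using hX x y by auto
    show "e' x y \<ge> 0" using Sm hx hy unfolding metric_on_def e'_def by blast
    show "e' x y = e' y x" using Sm hx hy unfolding metric_on_def e'_def by blast
    have "e' x y = 0 \<longleftrightarrow> h x = h y" using Sm hx hy unfolding metric_on_def e'_def by blast
    also have "\<dots> \<longleftrightarrow> x = y" using hinj x y unfolding inj_on_def by blast
    finally show "e' x y = 0 \<longleftrightarrow> x = y" .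
  next
    fix x y z assume x: "x \<in> X" and y: "y \<in> X" and z: "z \<in> X"
    have "h x \<in> S" "h y \<in> S" "h z \<in> S" using hX x y z by auto
    then show "e' x z \<le> e' x y + e' y z" using Sm unfolding metric_on_def e'_def by blast
  qed
  moreover have "\<forall>x\<in>X. \<forall>y\<in>X. e' x y \<in> D" using SD hX unfolding e'_def by auto
  moreover have "finite X" unfolding X_def by simp
  ultimately obtain f' where f': "iso_embed X e' M d f'" using emb unfolding embeds_all_finite_def by blast
  define f where "f = f' \<circ> inv_into X h"
  have invX: "\<And>z. z \<in> S \<Longrightarrow> inv_into X h z \<in> X \<and> h (inv_into X h z) = z"
  proof -
    fix z assume z: "z \<in> S"
    have im: "h ` X = S" using h unfolding X_def bij_betw_def by auto
    show "inv_into X h z \<in> X \<and> h (inv_into X h z) = z"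
      using z im inv_into_into[of z h X] f_inv_into_f[of z h X] by auto
  qed
  have f'M: "\<And>x. x \<in> X \<Longrightarrow> f' x \<in> M" and f'd: "\<And>x y. x \<in> X \<Longrightarrow> y \<in> X \<Longrightarrow> d (f' x) (f' y) = e' x y"
    using f' unfolding iso_embed_def by auto
  have f: "iso_embed S e M d f"
    unfolding iso_embed_def
  proof (intro conjI ballI)
    fix x assume x: "x \<in> S"
    show "f x \<in> M" using f'M invX[OF x] unfolding f_def by simp
  next
    fix x y assume x: "x \<in> S" and y: "y \<in> S"
    show "d (f x) (f y) = e x y" using f'd invX[OF x] invX[OF y] unfolding f_def e'_def by simp
  qed
  have fM: "\<And>x. x \<in> S \<Longrightarrow> f x \<in> M" using f unfolding iso_embed_def by auto
  have fd: "\<And>x y. x \<in> S \<Longrightarrow> y \<in> S \<Longrightarrow> d (f x) (f y) = e x y" using f unfolding iso_embed_def by auto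
  have bM: "\<And>x. x \<in> T \<Longrightarrow> \<beta> x \<in> M" using be unfolding iso_embed_def by auto
  have bd: "\<And>x y. x \<in> T \<Longrightarrow> y \<in> T \<Longrightarrow> d (\<beta> x) (\<beta> y) = e x y" using be unfolding iso_embed_def by auto
  have finj: "inj_on f T"
  proof (rule inj_onI)
    fix x y assume xy: "x \<in> T" "y \<in> T" "f x = f y"
    have "e x y = d (f x) (f y)" using fd TS xy(1,2) by (metis subsetD)
    also have "\<dots> = d (f x) (f x)" using xy by simp
    also have "\<dots> = 0" using Mm fM xy TS unfolding metric_on_def by auto
    finally show "x = y" using Sm xy TS unfolding metric_on_def by blast
  qed
  have binj: "inj_on \<beta> T"
  proof (rule inj_onI)
    fix x y assume xy: "x \<in> T" "y \<in> T" "\<beta> x = \<beta> y"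
    have "e x y = d (\<beta> x) (\<beta> y)" using bd xy(1,2) by metis
    also have "\<dots> = d (\<beta> x) (\<beta> x)" using xy by simp
    also have "\<dots> = 0" using Mm bM xy unfolding metric_on_def by auto
    finally show "x = y" using Sm xy TS unfolding metric_on_def by blast
  qed
  define g0 where "g0 = \<beta> \<circ> inv_into T f"
  have g0f: "\<And>z. z \<in> T \<Longrightarrow> g0 (f z) = \<beta> z" using finj unfolding g0_def by auto
  have "bij_betw g0 (f ` T) (\<beta> ` T)"
  proof -
    have "inj_on g0 (f ` T)" using binj finj g0f unfolding inj_on_def by auto
    moreover have "g0 ` (f ` T) = \<beta> ` T" using g0f by (auto simp: image_iff)
    ultimately show ?thesis by (simp add: bij_betw_def)
  qed
  moreover have "\<forall>x\<in>f ` T. \<forall>y\<in>f ` T. d (g0 x) (g0 y) = d x y" using g0f bd fd TS by auto (metis subsetD)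
  moreover have "f ` T \<subseteq> M" "\<beta> ` T \<subseteq> M" using fM bM TS by auto
  moreover have "finite (f ` T)" using TS Sf by (meson finite_imageI finite_subset)
  ultimately obtain g where g: "bij_betw g M M" "\<forall>x\<in>M. \<forall>y\<in>M. d (g x) (g y) = d x y"
      "\<forall>x\<in>f ` T. g x = g0 x"
    using hom[unfolded homogeneous_def, rule_format, of "f ` T" "\<beta> ` T" g0] by blast
  have "iso_embed S e M d (g \<circ> f)"
    using g(1,2) fM fd unfolding iso_embed_def bij_betw_def by auto
  moreover have "\<forall>z\<in>T. (g \<circ> f) z = \<beta> z" using g(3) g0f by auto
  ultimately show ?thesis by blast
qed
theorem lemma4p2:
  fixes D :: "real set" and M :: "'a set" and d :: "'a \<Rightarrow> 'a \<Rightarrow> real"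
    and A :: "'a set" and s :: nat and t :: "nat \<Rightarrow> 'a \<Rightarrow> real"
    and d'' :: "nat \<Rightarrow> nat \<Rightarrow> real"
  assumes D_fin: "finite D" and D_nonneg: "\<forall>r\<in>D. r \<ge> 0" and D_0: "0 \<in> D"
    and D_univ: "universal_dset D"
    and M_U: "in_U D M d"
    and A_sub: "A \<subseteq> M" and A_fin: "finite A"
    and t_kat: "\<forall>i<s. katetov D M d A (t i)"
    and d''_metric: "metric_on {..<s} d''"
    and d''_in: "\<forall>i<s. \<forall>j<s. d'' i j \<in> kdist M d A (t i) (t j)"
  shows "metric_on (Inl ` A \<union> Inr ` {..<s}) (amalg d t d'') \<and>
    (\<forall>C \<subseteq> {..<s}. \<forall>\<beta>.
       iso_embed (Inl ` A \<union> Inr ` C) (amalg d t d'') M d \<beta> \<and> (\<forall>x\<in>A. \<beta> (Inl x) = x) \<longrightarrow>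
       (\<exists>\<alpha>. iso_embed (Inl ` A \<union> Inr ` {..<s}) (amalg d t d'') M d \<alpha> \<and>
            (\<forall>z \<in> Inl ` A \<union> Inr ` C. \<alpha> z = \<beta> z) \<and>
            (\<forall>i<s. \<alpha> (Inr i) \<in> orb M d A (t i))))"
proof -
  have Mm: "metric_on M d" using M_U by (auto simp: in_U_def)
  have DM: "dist_set M d = D" using M_U by (auto simp: in_U_def)
  have dsym: "\<And>x y. x \<in> M \<Longrightarrow> y \<in> M \<Longrightarrow> d x y = d y x" using Mm unfolding metric_on_def by auto
  have dtri: "\<And>x y z. x \<in> M \<Longrightarrow> y \<in> M \<Longrightarrow> z \<in> M \<Longrightarrow> d x z \<le> d x y + d y z"
    using Mm unfolding metric_on_def by auto
  have d0: "\<And>x y. x \<in> M \<Longrightarrow> y \<in> M \<Longrightarrow> d x y = 0 \<longleftrightarrow> x = y" using Mm unfolding metric_on_def by auto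
  have dnn: "\<And>x y. x \<in> M \<Longrightarrow> y \<in> M \<Longrightarrow> d x y \<ge> 0" using Mm unfolding metric_on_def by auto
  have dD: "\<And>x y. x \<in> M \<Longrightarrow> y \<in> M \<Longrightarrow> d x y \<in> D" using DM unfolding dist_set_def by auto
  have tD: "\<And>i x. i < s \<Longrightarrow> x \<in> A \<Longrightarrow> t i x \<in> D" using t_kat unfolding katetov_def by auto
  have tpos: "\<And>i x. i < s \<Longrightarrow> x \<in> A \<Longrightarrow> t i x > 0"
  proof -
    fix i x assume "i < s" "x \<in> A"
    then have "t i x \<in> D - {0}" using t_kat unfolding katetov_def by auto
    then show "t i x > 0" using D_nonneg by force
  qed
  have k1: "\<And>i x y. i < s \<Longrightarrow> x \<in> A \<Longrightarrow> y \<in> A \<Longrightarrow> t i x \<le> d x y + t i y"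
  proof -
    fix i x y assume "i < s" "x \<in> A" "y \<in> A"
    then have "\<bar>t i x - t i y\<bar> \<le> d x y" using t_kat unfolding katetov_def by blast
    then show "t i x \<le> d x y + t i y" by linarith
  qed
  have k2: "\<And>i x y. i < s \<Longrightarrow> x \<in> A \<Longrightarrow> y \<in> A \<Longrightarrow> d x y \<le> t i x + t i y"
    using t_kat unfolding katetov_def by (auto simp: abs_le_iff)
  have d''sym: "\<And>i j. i < s \<Longrightarrow> j < s \<Longrightarrow> d'' i j = d'' j i" using d''_metric unfolding metric_on_def by auto
  have d''tri: "\<And>i j k. i < s \<Longrightarrow> j < s \<Longrightarrow> k < s \<Longrightarrow> d'' i k \<le> d'' i j + d'' j k"
    using d''_metric unfolding metric_on_def by auto
  have d''0: "\<And>i j. i < s \<Longrightarrow> j < s \<Longrightarrow> d'' i j = 0 \<longleftrightarrow> i = j" using d''_metric unfolding metric_on_def by auto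
  have d''nn: "\<And>i j. i < s \<Longrightarrow> j < s \<Longrightarrow> d'' i j \<ge> 0" using d''_metric unfolding metric_on_def by auto
  have d''D: "\<And>i j. i < s \<Longrightarrow> j < s \<Longrightarrow> d'' i j \<in> D"
  proof -
    fix i j assume "i < s" "j < s"
    then obtain u v where "u \<in> orb M d A (t i)" "v \<in> orb M d A (t j)" "d'' i j = d u v"
      using d''_in unfolding kdist_def by blast
    then show "d'' i j \<in> D" using dD unfolding orb_def by auto
  qed
  have tt: "t i x \<le> d'' i j + t j x \<and> d'' i j \<le> t i x + t j x"
    if ij: "i < s" "j < s" and x: "x \<in> A" for i j x
  proof -
    obtain u v where uv: "u \<in> orb M d A (t i)" "v \<in> orb M d A (t j)" "d'' i j = d u v"
      using d''_in ij unfolding kdist_def by blast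
    have u: "u \<in> M" "d u x = t i x" and v: "v \<in> M" "d v x = t j x"
      using uv x unfolding orb_def by auto
    have xM: "x \<in> M" using x A_sub by auto
    have "d u x \<le> d u v + d v x" using dtri u v xM by blast
    moreover have "d u v \<le> d u x + d x v" using dtri u v xM by blast
    moreover have "d x v = d v x" using dsym v xM by blast
    ultimately show ?thesis using uv u v by simp
  qed
  have dtriA: "\<And>x y z. x \<in> A \<Longrightarrow> y \<in> A \<Longrightarrow> z \<in> A \<Longrightarrow> d x z \<le> d x y + d y z"
    using dtri A_sub by (meson subsetD)
  have tt2: "\<And>i j x. i < s \<Longrightarrow> j < s \<Longrightarrow> x \<in> A \<Longrightarrow> t j x \<le> t i x + d'' i j"
  proof -
    fix i j x assume "i < s" "j < s" "x \<in> A"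
    then show "t j x \<le> t i x + d'' i j" using tt[of j i x] d''sym[of i j] by linarith
  qed
  have k3: "\<And>i x y. i < s \<Longrightarrow> x \<in> A \<Longrightarrow> y \<in> A \<Longrightarrow> t i y \<le> t i x + d x y"
  proof -
    fix i x y assume "i < s" "x \<in> A" "y \<in> A"
    then show "t i y \<le> t i x + d x y" using k1[of i y x] dsym[of x y] A_sub by (auto simp: subsetD)
  qed
  let ?S = "Inl ` A \<union> Inr ` {..<s}"
  let ?e = "amalg d t d''"
  have met: "metric_on ?S ?e"
  proof -
    have 1: "\<forall>p\<in>?S. \<forall>q\<in>?S. ?e p q \<ge> 0 \<and> (?e p q = 0 \<longleftrightarrow> p = q) \<and> ?e p q = ?e q p"
    proof (intro ballI)
      fix p q assume p: "p \<in> ?S" and q: "q \<in> ?S"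
      show "?e p q \<ge> 0 \<and> (?e p q = 0 \<longleftrightarrow> p = q) \<and> ?e p q = ?e q p"
        using p q
      proof (elim UnE imageE)
        fix x y assume "x \<in> A" "y \<in> A" "p = Inl x" "q = Inl y"
        then show ?thesis using A_sub dsym d0 dnn by (simp add: subsetD)
      next
        fix x y assume "x \<in> A" "y \<in> {..<s}" "p = Inl x" "q = Inr y"
        then show ?thesis using tpos[of y x] by simp
      next
        fix x y assume "x \<in> {..<s}" "y \<in> A" "p = Inr x" "q = Inl y"
        then show ?thesis using tpos[of x y] by simp
      next
        fix x y assume "x \<in> {..<s}" "y \<in> {..<s}" "p = Inr x" "q = Inr y"
        then show ?thesis using d''sym d''0 d''nn by simp
      qed
    qed
    have 2: "\<forall>p\<in>?S. \<forall>q\<in>?S. \<forall>r\<in>?S. ?e p r \<le> ?e p q + ?e q r"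
    proof (intro ballI)
      fix p q r assume p: "p \<in> ?S" and q: "q \<in> ?S" and r: "r \<in> ?S"
      show "?e p r \<le> ?e p q + ?e q r"
        using p q r
      proof (elim UnE imageE)
        qed (auto simp: dtriA k1 k2 k3 tt tt2 d''tri)
    qed
    show ?thesis using 1 2 unfolding metric_on_def by blast
  qed
  have Sfin: "finite ?S" using A_fin by simp
  have SD: "\<forall>p\<in>?S. \<forall>q\<in>?S. ?e p q \<in> D"
  proof (intro ballI)
    fix p q assume p: "p \<in> ?S" and q: "q \<in> ?S"
    show "?e p q \<in> D" using p q
    proof (elim UnE imageE)
    qed (use A_sub dD in \<open>simp_all add: tD d''D subset_iff\<close>)
  qed
  show ?thesis
  proof (intro conjI met allI impI)
    fix C \<beta> assume C: "C \<subseteq> {..<s}"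
      and b: "iso_embed (Inl ` A \<union> Inr ` C) ?e M d \<beta> \<and> (\<forall>x\<in>A. \<beta> (Inl x) = x)"
    have TS: "Inl ` A \<union> Inr ` C \<subseteq> ?S" using C by auto
    obtain \<alpha> where a: "iso_embed ?S ?e M d \<alpha>" "\<forall>z\<in>Inl ` A \<union> Inr ` C. \<alpha> z = \<beta> z"
      using extend_lemma[OF M_U Sfin met SD TS conjunct1[OF b]] by (elim exE conjE) (rule that)
    have "\<alpha> (Inr i) \<in> orb M d A (t i)" if i: "i < s" for i
    proof -
      have aM: "\<alpha> (Inr i) \<in> M" using a(1) i unfolding iso_embed_def by auto
      have ad: "d (\<alpha> (Inr i)) x = t i x" if x: "x \<in> A" for x
      proof -
        have "\<alpha> (Inl x) = x" using a(2) b x by auto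
        moreover have "d (\<alpha> (Inr i)) (\<alpha> (Inl x)) = ?e (Inr i) (Inl x)"
          using a(1) i x unfolding iso_embed_def by simp
        ultimately show ?thesis by simp
      qed
      have "\<alpha> (Inr i) \<notin> A"
      proof
        assume xA: "\<alpha> (Inr i) \<in> A"
        have "d (\<alpha> (Inr i)) (\<alpha> (Inr i)) = 0" using d0 aM by blast
        then show False using ad[OF xA] tpos[OF i xA] by simp
      qed
      then show ?thesis using aM ad unfolding orb_def by auto
    qed
    then show "\<exists>\<alpha>. iso_embed ?S ?e M d \<alpha> \<and> (\<forall>z\<in>Inl ` A \<union> Inr ` C. \<alpha> z = \<beta> z) \<and>
            (\<forall>i<s. \<alpha> (Inr i) \<in> orb M d A (t i))" using a by blast
  qed
qed

end
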